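(* Let $n\ge 3$. The map $\phi_n:|\mathcal K_n|\to\partial(Root_n)$ is injective. Equivalently, if $\mathcal T_1,\mathcal T_2$ are nonempty admissible families and there exist positive reals $\{\alpha_{ij}\}_{[i,j)\in\mathcal T_1}$, $\{\beta_{ij}\}_{[i,j)\in\mathcal T_2}$ with $\sum\alpha_{ij}=1=\sum\beta_{ij}$ and $\sum_{[i,j)\in\mathcal T_1}\alpha_{ij}(e_i-e_j)=\sum_{[i,j)\in\mathcal T_2}\beta_{ij}(e_i-e_j)$, then $\mathcal T_1=\mathcal T_2$ and $\alpha_{ij}=\beta_{ij}$ for all $[i,j)\in\mathcal T_1$.
   Context: Identify $[n]$ with the vertices of a regular $n$-gon in $S^1$, labelled counterclockwise, with counterclockwise order $\preceq$; for $a\ne b\in[n]$, $[a,b)=\{z\in S^1:a\preceq z\prec b\}$. A finite collection of such arcs is admissible if any two distinct members $I,J$ are either intersecting and strictly nested, or disjoint with the sink of neither equal to the source of the other. $\mathcal K_n$ is the simplicial complex on the arcs $[i,j)$, $i\neq j$, whose simplices are the nonempty admissible families. $Root_n=\mathrm{Conv}\{e_i-e_j:i\ne j\}$ and $\phi_n$ is affine on each simplex of $\mathcal K_n$ with $\phi_n([i,j))=e_i-e_j$. *)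

theory Defs
  imports Complex_Main
begin

text \<open>The circle S^1 is modelled as the interval [0,n) of reals (reals mod n),
  with vertex k of the regular n-gon (k = 0,...,n-1, labelled counterclockwise)
  at position k. Counterclockwise order starting at a is measured by the
  residue of (z - a) modulo n.\<close>

definition circ_mod :: "nat \<Rightarrow> real \<Rightarrow> real" where
  "circ_mod n y = y - real n * of_int \<lfloor>y / real n\<rfloor>"

text \<open>An arc [a,b) is encoded by the pair (a,b) (source a, sink b);
  its point set is the half-open counterclockwise arc from a to b.\<close>

definition arc_set :: "nat \<Rightarrow> nat \<times> nat \<Rightarrow> real set" where
  "arc_set n I = {z. 0 \<le> z \<and> z < real n \<and>
      circ_mod n (z - real (fst I)) < circ_mod n (real (snd I) - real (fst I))}"

definition is_arc :: "nat \<Rightarrow> nat \<times> nat \<Rightarrow> bool" where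
  "is_arc n I \<longleftrightarrow> fst I < n \<and> snd I < n \<and> fst I \<noteq> snd I"

definition compatible_arcs :: "nat \<Rightarrow> nat \<times> nat \<Rightarrow> nat \<times> nat \<Rightarrow> bool" where
  "compatible_arcs n I J \<longleftrightarrow>
     (arc_set n I \<inter> arc_set n J \<noteq> {} \<and>
        (arc_set n I \<subset> arc_set n J \<or> arc_set n J \<subset> arc_set n I))
   \<or> (arc_set n I \<inter> arc_set n J = {} \<and> snd I \<noteq> fst J \<and> snd J \<noteq> fst I)"

text \<open>Admissible families = simplices of K_n: nonempty finite families of arcs,
  pairwise compatible.\<close>

definition admissible :: "nat \<Rightarrow> (nat \<times> nat) set \<Rightarrow> bool" where
  "admissible n T \<longleftrightarrow> finite T \<and> T \<noteq> {} \<and> (\<forall>I\<in>T. is_arc n I) \<and>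
     (\<forall>I\<in>T. \<forall>J\<in>T. I \<noteq> J \<longrightarrow> compatible_arcs n I J)"

definition unit_vec :: "nat \<Rightarrow> nat \<Rightarrow> real" where
  "unit_vec i = (\<lambda>k. if k = i then 1 else 0)"

definition root_comb :: "(nat \<times> nat) set \<Rightarrow> (nat \<times> nat \<Rightarrow> real) \<Rightarrow> nat \<Rightarrow> real" where
  "root_comb T \<alpha> = (\<lambda>k. \<Sum>I\<in>T. \<alpha> I * (unit_vec (fst I) k - unit_vec (snd I) k))"

end

theory Submission imports Defs begin
lemma m2: "(x::nat) < 2*n \<Longrightarrow> x mod n = (if x < n then x else x - n)"
  by (simp add: le_mod_geq)
definition inE :: "nat \<Rightarrow> nat \<times> nat \<Rightarrow> nat \<Rightarrow> bool" where
 "inE n I k \<longleftrightarrow> (k + n - fst I) mod n < (snd I + n - fst I) mod n"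
definition pr :: "nat \<Rightarrow> nat \<Rightarrow> nat" where "pr n k = (k + n - 1) mod n"
lemma inE_alt: assumes "a<n" "b<n" "a\<noteq>b" "k<n"
  shows "inE n (a,b) k \<longleftrightarrow> (if a < b then a \<le> k \<and> k < b else a \<le> k \<or> k < b)"
  using assms unfolding inE_def by (auto simp add: m2)
lemma pr_alt: "k < n \<Longrightarrow> pr n k = (if k = 0 then n - 1 else k - 1)"
  unfolding pr_def by (auto simp add: m2)
lemma pr_lt: "k < n \<Longrightarrow> pr n k < n" by (auto simp add: pr_alt)
lemma IL: assumes "a<n" "b<n" "a\<noteq>b" "c<n" "d<n" "c\<noteq>d" "k<n" "x<n"
  "inE n (c,d) k" "inE n (a,b) k" "\<not> inE n (c,d) (pr n a)" "\<not> inE n (c,d) b" "inE n (c,d) x"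
  shows "inE n (a,b) x"
  using assms by (cases "a = 0"; auto simp add: inE_alt pr_lt pr_alt split: if_splits)
lemma L1: assumes "a<n" "b<n" "a\<noteq>b" "k<n"
  shows "(inE n (a,b) k \<and> \<not> inE n (a,b) (pr n k)) \<longleftrightarrow> k = a"
  using assms by (simp add: inE_alt pr_lt pr_alt) arith
lemma L2: assumes "a<n" "b<n" "a\<noteq>b" "k<n"
  shows "(\<not>inE n (a,b) k \<and> inE n (a,b) (pr n k)) \<longleftrightarrow> k = b"
  using assms by (simp add: inE_alt pr_lt pr_alt) arith

definition arcp :: "nat \<Rightarrow> nat \<times> nat \<Rightarrow> bool" where
  "arcp n I \<longleftrightarrow> fst I < n \<and> snd I < n \<and> fst I \<noteq> snd I"

lemma L1': "arcp n I \<Longrightarrow> k < n \<Longrightarrow> (inE n I k \<and> \<not> inE n I (pr n k)) \<longleftrightarrow> k = fst I"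
  using L1[of "fst I" n "snd I" k] by (simp add: arcp_def)
lemma L2': "arcp n I \<Longrightarrow> k < n \<Longrightarrow> (\<not> inE n I k \<and> inE n I (pr n k)) \<longleftrightarrow> k = snd I"
  using L2[of "fst I" n "snd I" k] by (simp add: arcp_def)
lemma IL': assumes "arcp n M" "arcp n J" "k<n" "x<n"
  "inE n J k" "inE n M k" "\<not> inE n J (pr n (fst M))" "\<not> inE n J (snd M)" "inE n J x"
  shows "inE n M x"
  using IL[of "fst M" n "snd M" "fst J" "snd J" k x] assms by (simp add: arcp_def)
lemma inE_fst: "arcp n I \<Longrightarrow> inE n I (fst I)"
  using L1'[of n I "fst I"] by (simp add: arcp_def)
lemma notinE_snd: "arcp n I \<Longrightarrow> \<not> inE n I (snd I)"
  using L2'[of n I "snd I"] by (simp add: arcp_def)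
lemma notinE_pr: "arcp n I \<Longrightarrow> \<not> inE n I (pr n (fst I))"
  using L1'[of n I "fst I"] by (simp add: arcp_def)
lemma inE_pr_snd: "arcp n I \<Longrightarrow> inE n I (pr n (snd I))"
  using L2'[of n I "snd I"] by (simp add: arcp_def)

definition E :: "nat \<Rightarrow> nat \<times> nat \<Rightarrow> nat set" where
  "E n I = {k. k < n \<and> inE n I k}"

lemma finE: "finite (E n I)" unfolding E_def by auto

lemma Einj: assumes "arcp n I" "arcp n J" "E n I = E n J" shows "I = J"
proof -
  have "\<And>k. k < n \<Longrightarrow> inE n I k = inE n J k" using assms(3) unfolding E_def by blast
  then have a: "\<And>k. k < n \<Longrightarrow> inE n I (pr n k) = inE n J (pr n k)" using pr_lt by blast
  have "fst I = fst J"
    using L1'[OF assms(1), of "fst I"] L1'[OF assms(2), of "fst I"] a[of "fst I"]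
      \<open>\<And>k. k < n \<Longrightarrow> inE n I k = inE n J k\<close>[of "fst I"] assms(1) by (auto simp: arcp_def)
  moreover have "snd I = snd J"
    using L2'[OF assms(1), of "snd I"] L2'[OF assms(2), of "snd I"] a[of "snd I"]
      \<open>\<And>k. k < n \<Longrightarrow> inE n I k = inE n J k\<close>[of "snd I"] assms(1) by (auto simp: arcp_def)
  ultimately show ?thesis by (simp add: prod_eq_iff)
qed

definition cE :: "nat \<Rightarrow> nat \<times> nat \<Rightarrow> nat \<times> nat \<Rightarrow> bool" where
  "cE n I J \<longleftrightarrow> (E n I \<inter> E n J \<noteq> {} \<and> (E n I \<subset> E n J \<or> E n J \<subset> E n I))
    \<or> (E n I \<inter> E n J = {} \<and> snd I \<noteq> fst J \<and> snd J \<noteq> fst I)"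

definition adm0 :: "nat \<Rightarrow> (nat \<times> nat) set \<Rightarrow> bool" where
  "adm0 n T \<longleftrightarrow> finite T \<and> (\<forall>I\<in>T. arcp n I) \<and> (\<forall>I\<in>T. \<forall>J\<in>T. I \<noteq> J \<longrightarrow> cE n I J)"

lemma card_lt: "E n I \<subset> E n J \<Longrightarrow> card (E n I) < card (E n J)"
  by (simp add: finE psubset_card_mono)

lemma gapA:
  assumes "adm0 n S" "S \<noteq> {}" "\<forall>I\<in>S. snd I \<in> X \<or> pr n (fst I) \<in> X"
  shows "\<exists>k\<in>X. \<forall>I\<in>S. \<not> inE n I k"
proof (rule ccontr)
  assume H: "\<not> ?thesis"
  have fin: "finite S" using assms(1) by (simp add: adm0_def)
  define m where "m = Max ((\<lambda>J. card (E n J)) ` S)"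
  have "m \<in> (\<lambda>J. card (E n J)) ` S" unfolding m_def using fin assms(2) by (intro Max_in) auto
  then obtain I where I: "I \<in> S" "card (E n I) = m" by blast
  have mx: "\<And>J. J \<in> S \<Longrightarrow> card (E n J) \<le> card (E n I)"
    using I fin unfolding m_def by auto
  have aI: "arcp n I" using I assms(1) by (simp add: adm0_def)
  have cI: "\<And>J. J \<in> S \<Longrightarrow> J \<noteq> I \<Longrightarrow> cE n I J" using I assms(1) by (simp add: adm0_def)
  have aS: "\<And>J. J \<in> S \<Longrightarrow> arcp n J" using assms(1) by (simp add: adm0_def)
  consider "snd I \<in> X" | "pr n (fst I) \<in> X" using assms(3) I by blast
  then show False
  proof cases
    case 1
    then obtain J where J: "J \<in> S" "inE n J (snd I)" using H by blast
    have b: "snd I < n" using aI by (simp add: arcp_def)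
    have "J \<noteq> I" using J notinE_snd[OF aI] by auto
    then have c: "cE n I J" using cI J by auto
    have "inE n I (pr n (snd I))" using inE_pr_snd[OF aI] .
    show False using c unfolding cE_def
    proof (elim disjE conjE)
      assume "E n I \<subset> E n J" then show False using card_lt[of n I J] mx[OF J(1)] by linarith
    next
      assume "E n J \<subset> E n I" then show False using J b notinE_snd[OF aI] by (auto simp: E_def)
    next
      assume d: "E n I \<inter> E n J = {}" "snd I \<noteq> fst J"
      have "\<not> inE n J (pr n (snd I))" using d(1) \<open>inE n I (pr n (snd I))\<close> pr_lt[OF b]
        by (auto simp: E_def)
      then show False using L1'[OF aS[OF J(1)] b] J d by auto
    qed
  next
    case 2
    then obtain J where J: "J \<in> S" "inE n J (pr n (fst I))" using H by blast
    have a: "fst I < n" using aI by (simp add: arcp_def)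
    have "J \<noteq> I" using J notinE_pr[OF aI] by auto
    then have c: "cE n I J" using cI J by auto
    show False using c unfolding cE_def
    proof (elim disjE conjE)
      assume "E n I \<subset> E n J" then show False using card_lt[of n I J] mx[OF J(1)] by linarith
    next
      assume "E n J \<subset> E n I" then show False using J pr_lt[OF a] notinE_pr[OF aI] by (auto simp: E_def)
    next
      assume d: "E n I \<inter> E n J = {}" "snd J \<noteq> fst I"
      have "\<not> inE n J (fst I)" using d(1) inE_fst[OF aI] a by (auto simp: E_def)
      then show False using L2'[OF aS[OF J(1)] a] J d by auto
    qed
  qed
qed

definition fT :: "nat \<Rightarrow> (nat \<times> nat) set \<Rightarrow> (nat \<times> nat \<Rightarrow> real) \<Rightarrow> nat \<Rightarrow> real" where
  "fT n T g k = (\<Sum>J\<in>T. if inE n J k then g J else 0)"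

lemma f_ge: assumes "finite T" "\<forall>J\<in>T. g J > 0" "M \<in> T" "inE n M k"
  shows "g M \<le> fT n T g k"
proof -
  have "(if inE n M k then g M else 0) \<le> (\<Sum>J\<in>T. if inE n J k then g J else 0)"
    by (rule member_le_sum) (use assms in \<open>auto simp: less_imp_le\<close>)
  then show ?thesis using assms(4) by (simp add: fT_def)
qed

lemma f_zero_iff: assumes "finite T" "\<forall>J\<in>T. g J > 0"
  shows "fT n T g k = 0 \<longleftrightarrow> (\<forall>J\<in>T. \<not> inE n J k)"
  unfolding fT_def using assms
  by (subst sum_nonneg_eq_0_iff) (auto simp: less_imp_le dest: bspec)

lemma f_remove: assumes "finite T" "M \<in> T"
  shows "fT n T g k = (if inE n M k then g M else 0) + fT n (T - {M}) g k"
  unfolding fT_def using assms by (simp add: sum.remove)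

lemma f_single: assumes "finite T" "M \<in> T" "inE n M k" "\<forall>J\<in>T. J \<noteq> M \<longrightarrow> \<not> inE n J k"
  shows "fT n T g k = g M"
proof -
  have "fT n (T - {M}) g k = 0" unfolding fT_def using assms(4) by (intro sum.neutral) auto
  then show ?thesis using f_remove[OF assms(1,2)] assms(3) by simp
qed

lemma nonempE: "arcp n I \<Longrightarrow> E n I \<noteq> {}"
  using inE_fst[of n I] by (auto simp: E_def arcp_def)

lemma minl: assumes "adm0 n T" "\<forall>J\<in>T. g J > 0" "M \<in> T" "\<forall>J\<in>T. card (E n J) \<le> card (E n M)"
  shows "\<exists>k. k < n \<and> inE n M k \<and> fT n T g k = g M"
proof -
  have fin: "finite T" and aT: "\<And>J. J\<in>T \<Longrightarrow> arcp n J"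
    and cT: "\<And>I J. I\<in>T \<Longrightarrow> J\<in>T \<Longrightarrow> I\<noteq>J \<Longrightarrow> cE n I J" using assms(1) by (auto simp: adm0_def)
  have aM: "arcp n M" using aT assms(3) .
  define S where "S = {J\<in>T. J \<noteq> M \<and> E n J \<subseteq> E n M}"
  have "\<exists>k\<in>E n M. \<forall>J\<in>S. \<not> inE n J k"
  proof (cases "S = {}")
    case True then show ?thesis using inE_fst[OF aM] aM by (auto simp: E_def arcp_def)
  next
    case False
    have aS: "adm0 n S" using assms(1) unfolding adm0_def S_def by auto
    have "\<forall>I\<in>S. snd I \<in> E n M \<or> pr n (fst I) \<in> E n M"
    proof (rule ballI, rule ccontr)
      fix I assume I: "I \<in> S" and nb: "\<not> (snd I \<in> E n M \<or> pr n (fst I) \<in> E n M)"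
      have aI: "arcp n I" and IT: "I \<in> T" and IM: "I \<noteq> M" and sub: "E n I \<subseteq> E n M"
        using I aT unfolding S_def by auto
      have lt: "fst I < n" "snd I < n" using aI by (auto simp: arcp_def)
      have "fst I \<in> E n M" using sub inE_fst[OF aI] lt by (auto simp: E_def)
      then have kM: "inE n M (fst I)" by (simp add: E_def)
      have "E n M \<subseteq> E n I"
      proof
        fix x assume "x \<in> E n M"
        then show "x \<in> E n I"
          using IL'[OF aI aM lt(1), of x] kM inE_fst[OF aI] nb pr_lt[OF lt(1)] lt
          by (auto simp: E_def)
      qed
      then have "E n I = E n M" using sub by auto
      moreover have "cE n I M" using cT IT assms(3) IM by auto
      ultimately show False using nonempE[OF aI] by (auto simp: cE_def)
    qed
    then show ?thesis using gapA[OF aS False] by blast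
  qed
  then obtain k where k: "k < n" "inE n M k" "\<And>J. J\<in>S \<Longrightarrow> \<not> inE n J k" by (auto simp: E_def)
  have "\<forall>J\<in>T. J \<noteq> M \<longrightarrow> \<not> inE n J k"
  proof (intro ballI impI notI)
    fix J assume J: "J \<in> T" "J \<noteq> M" "inE n J k"
    have "cE n J M" using cT J assms(3) by auto
    then show False unfolding cE_def
    proof (elim disjE conjE)
      assume "E n J \<subset> E n M" then show False using k J unfolding S_def by auto
    next
      assume "E n M \<subset> E n J" then show False using card_lt[of n M J] assms(4) J by fastforce
    next
      assume "E n J \<inter> E n M = {}" then show False using k J by (auto simp: E_def)
    qed
  qed
  then show ?thesis using f_single[OF fin assms(3) k(2)] k by blast
qed

lemma noncov: assumes "adm0 n T" "M \<in> T" "\<forall>J\<in>T. card (E n J) \<le> card (E n M)"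
  shows "\<forall>J\<in>T. \<not> inE n J (snd M) \<and> \<not> inE n J (pr n (fst M))"
proof
  fix J assume J: "J \<in> T"
  have aJ: "arcp n J" and aM: "arcp n M" using assms J by (auto simp: adm0_def)
  have lt: "fst M < n" "snd M < n" using aM by (auto simp: arcp_def)
  show "\<not> inE n J (snd M) \<and> \<not> inE n J (pr n (fst M))"
  proof (cases "J = M")
    case True then show ?thesis using notinE_snd[OF aM] notinE_pr[OF aM] by simp
  next
    case False
    then have c: "cE n M J" using assms J by (auto simp: adm0_def)
    show ?thesis
    proof (intro conjI notI)
      assume h: "inE n J (snd M)"
      show False using c unfolding cE_def
      proof (elim disjE conjE)
        assume "E n M \<subset> E n J" then show False using card_lt[of n M J] assms(3) J by fastforce
      next
        assume "E n J \<subset> E n M" then show False using h lt notinE_snd[OF aM] by (auto simp: E_def)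
      next
        assume d: "E n M \<inter> E n J = {}" "snd M \<noteq> fst J"
        have "\<not> inE n J (pr n (snd M))" using d(1) inE_pr_snd[OF aM] pr_lt[OF lt(2)] by (auto simp: E_def)
        then show False using L1'[OF aJ lt(2)] h d by auto
      qed
    next
      assume h: "inE n J (pr n (fst M))"
      show False using c unfolding cE_def
      proof (elim disjE conjE)
        assume "E n M \<subset> E n J" then show False using card_lt[of n M J] assms(3) J by fastforce
      next
        assume "E n J \<subset> E n M" then show False using h pr_lt[OF lt(1)] notinE_pr[OF aM] by (auto simp: E_def)
      next
        assume d: "E n M \<inter> E n J = {}" "snd J \<noteq> fst M"
        have "\<not> inE n J (fst M)" using d(1) inE_fst[OF aM] lt by (auto simp: E_def)
        then show False using L2'[OF aJ lt(1)] h d by auto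
      qed
    qed
  qed
qed

lemma lemC: assumes A1: "adm0 n T1" and A2: "adm0 n T2" and P1: "\<forall>J\<in>T1. a J > 0" and P2: "\<forall>J\<in>T2. b J > 0"
  and F: "\<forall>k<n. fT n T1 a k = fT n T2 b k" and M: "M \<in> T1"
  and mx: "\<forall>J\<in>T1 \<union> T2. card (E n J) \<le> card (E n M)"
  shows "M \<in> T2 \<and> a M = b M"
proof -
  have fin1: "finite T1" and fin2: "finite T2" using A1 A2 by (auto simp: adm0_def)
  have aM: "arcp n M" using A1 M by (auto simp: adm0_def)
  have aT2: "\<And>J. J\<in>T2 \<Longrightarrow> arcp n J" using A2 by (auto simp: adm0_def)
  have lt: "fst M < n" "snd M < n" using aM by (auto simp: arcp_def)
  have nc1: "\<forall>J\<in>T1. \<not> inE n J (snd M) \<and> \<not> inE n J (pr n (fst M))"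
    using noncov[OF A1 M] mx by auto
  have z1: "fT n T1 a (snd M) = 0" "fT n T1 a (pr n (fst M)) = 0"
    using f_zero_iff[OF fin1 P1] nc1 by auto
  have "fT n T2 b (snd M) = 0" "fT n T2 b (pr n (fst M)) = 0"
    using F z1 lt pr_lt[OF lt(1)] by auto
  then have nc2: "\<forall>J\<in>T2. \<not> inE n J (snd M) \<and> \<not> inE n J (pr n (fst M))"
    using f_zero_iff[OF fin2 P2] by auto
  have M2: "M \<in> T2"
  proof (rule ccontr)
    assume nM: "M \<notin> T2"
    define S where "S = {J\<in>T2. E n J \<inter> E n M \<noteq> {}}"
    have sub: "\<And>J. J \<in> S \<Longrightarrow> E n J \<subseteq> E n M"
    proof
      fix J x assume J: "J \<in> S" and x: "x \<in> E n J"
      obtain k where k: "k < n" "inE n J k" "inE n M k" using J unfolding S_def E_def by auto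
      have "J \<in> T2" using J S_def by auto
      then show "x \<in> E n M" using IL'[OF aM aT2[OF \<open>J\<in>T2\<close>] k(1), of x] k x nc2 by (auto simp: E_def)
    qed
    have "\<exists>k\<in>E n M. \<forall>J\<in>S. \<not> inE n J k"
    proof (cases "S = {}")
      case True then show ?thesis using inE_fst[OF aM] lt by (auto simp: E_def)
    next
      case False
      have aS: "adm0 n S" using A2 unfolding adm0_def S_def by auto
      have "\<forall>I\<in>S. snd I \<in> E n M \<or> pr n (fst I) \<in> E n M"
      proof (rule ballI, rule ccontr)
        fix I assume I: "I \<in> S" and nb: "\<not> (snd I \<in> E n M \<or> pr n (fst I) \<in> E n M)"
        have IT: "I \<in> T2" using I S_def by auto
        have aI: "arcp n I" using aT2[OF IT] .
        have ltI: "fst I < n" "snd I < n" using aI by (auto simp: arcp_def)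
        have "fst I \<in> E n M" using sub[OF I] inE_fst[OF aI] ltI by (auto simp: E_def)
        then have kM: "inE n M (fst I)" by (simp add: E_def)
        have "E n M \<subseteq> E n I"
        proof
          fix x assume "x \<in> E n M"
          then show "x \<in> E n I"
            using IL'[OF aI aM ltI(1), of x] kM inE_fst[OF aI] nb pr_lt[OF ltI(1)] ltI
            by (auto simp: E_def)
        qed
        then have "E n I = E n M" using sub[OF I] by auto
        then have "I = M" using Einj[OF aI aM] by simp
        then show False using IT nM by simp
      qed
      then show ?thesis using gapA[OF aS False] by blast
    qed
    then obtain k where k: "k < n" "inE n M k" "\<And>J. J\<in>S \<Longrightarrow> \<not> inE n J k" by (auto simp: E_def)
    have "\<forall>J\<in>T2. \<not> inE n J k"
    proof (intro ballI notI)
      fix J assume "J \<in> T2" "inE n J k"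
      then have "J \<in> S" using k unfolding S_def E_def by auto
      then show False using k \<open>inE n J k\<close> by auto
    qed
    then have "fT n T2 b k = 0" using f_zero_iff[OF fin2 P2] by auto
    moreover have "a M \<le> fT n T1 a k" using f_ge[OF fin1 P1 M k(2)] .
    ultimately show False using F k(1) P1 M by fastforce
  qed
  obtain k1 where k1: "k1 < n" "inE n M k1" "fT n T1 a k1 = a M" using minl[OF A1 P1 M] mx by auto
  obtain k2 where k2: "k2 < n" "inE n M k2" "fT n T2 b k2 = b M" using minl[OF A2 P2 M2] mx by auto
  have "a M \<le> b M" using f_ge[OF fin1 P1 M k2(2)] F k2 by auto
  moreover have "b M \<le> a M" using f_ge[OF fin2 P2 M2 k1(2)] F k1 by auto
  ultimately show ?thesis using M2 by auto
qed

lemma lemB: "adm0 n T1 \<Longrightarrow> adm0 n T2 \<Longrightarrow> \<forall>J\<in>T1. a J > 0 \<Longrightarrow> \<forall>J\<in>T2. b J > 0 \<Longrightarrow>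
  \<forall>k<n. fT n T1 a k = fT n T2 b k \<Longrightarrow> T1 = T2 \<and> (\<forall>I\<in>T1. a I = b I)"
proof (induction "card T1 + card T2" arbitrary: T1 T2 rule: less_induct)
  case less
  note A1 = less.prems(1) and A2 = less.prems(2) and P1 = less.prems(3) and P2 = less.prems(4)
    and F = less.prems(5)
  have fin1: "finite T1" and fin2: "finite T2" using A1 A2 by (auto simp: adm0_def)
  show ?case
  proof (cases "T1 \<union> T2 = {}")
    case True then show ?thesis by auto
  next
    case False
    define m where "m = Max ((\<lambda>J. card (E n J)) ` (T1 \<union> T2))"
    have "m \<in> (\<lambda>J. card (E n J)) ` (T1 \<union> T2)" unfolding m_def using fin1 fin2 False by (intro Max_in) auto
    then obtain M where M: "M \<in> T1 \<union> T2" "card (E n M) = m" by blast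
    have mx: "\<forall>J\<in>T1 \<union> T2. card (E n J) \<le> card (E n M)" using M fin1 fin2 unfolding m_def by auto
    have MM: "M \<in> T1 \<and> M \<in> T2 \<and> a M = b M"
    proof (cases "M \<in> T1")
      case True then show ?thesis using lemC[OF A1 A2 P1 P2 F True mx] by auto
    next
      case False
      then have "M \<in> T2" using M by auto
      moreover have "\<forall>J\<in>T2 \<union> T1. card (E n J) \<le> card (E n M)" using mx by auto
      ultimately show ?thesis using lemC[OF A2 A1 P2 P1 _ \<open>M\<in>T2\<close>] F by fastforce
    qed
    define U1 where "U1 = T1 - {M}"
    define U2 where "U2 = T2 - {M}"
    have B1: "adm0 n U1" "adm0 n U2" using A1 A2 unfolding adm0_def U1_def U2_def by auto
    have FU: "\<forall>k<n. fT n U1 a k = fT n U2 b k"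
    proof (intro allI impI)
      fix k assume "k < n"
      then have "fT n T1 a k = fT n T2 b k" using F by auto
      then show "fT n U1 a k = fT n U2 b k"
        using f_remove[OF fin1, of M n a k] f_remove[OF fin2, of M n b k] MM unfolding U1_def U2_def by (cases "inE n M k") auto
    qed
    have lt: "card U1 + card U2 < card T1 + card T2"
    proof -
      have "card T1 > 0" "card T2 > 0" using MM fin1 fin2 card_gt_0_iff by blast+
      then show ?thesis using MM fin1 fin2 unfolding U1_def U2_def by simp
    qed
    have "U1 = U2 \<and> (\<forall>I\<in>U1. a I = b I)"
      using less.hyps[OF lt B1] P1 P2 FU unfolding U1_def U2_def by auto
    then show ?thesis using MM unfolding U1_def U2_def by blast
  qed
qed

lemma cm: assumes "n > 0" "- real n \<le> y" "y < real n"
  shows "circ_mod n y = (if 0 \<le> y then y else y + real n)"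
proof (cases "0 \<le> y")
  case True
  then have "\<lfloor>y / real n\<rfloor> = 0" using assms by (simp add: floor_eq_iff)
  then show ?thesis using True by (simp add: circ_mod_def)
next
  case False
  then have "\<lfloor>y / real n\<rfloor> = -1" using assms by (simp add: floor_eq_iff field_simps)
  then show ?thesis using False by (simp add: circ_mod_def)
qed

lemma fl1: "0 \<le> z \<Longrightarrow> (real m \<le> z) \<longleftrightarrow> m \<le> nat \<lfloor>z\<rfloor>"
  by (metis floor_of_nat le_floor_iff le_nat_iff of_int_of_nat_eq zero_le_floor)
lemma fl2: "0 \<le> z \<Longrightarrow> (z < real m) \<longleftrightarrow> nat \<lfloor>z\<rfloor> < m"
  using fl1[of z m] by (metis floor_less_iff le_nat_floor linorder_not_le nat_less_iff of_int_of_nat_eq zero_le_floor)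

lemma arc_mem: assumes "is_arc n I" "0 \<le> z" "z < real n"
  shows "z \<in> arc_set n I \<longleftrightarrow> inE n I (nat \<lfloor>z\<rfloor>)"
proof -
  obtain a b where I: "I = (a,b)" by fastforce
  have ab: "a < n" "b < n" "a \<noteq> b" using assms(1) I by (auto simp: is_arc_def)
  have n0: "n > 0" using ab by simp
  have kn: "nat \<lfloor>z\<rfloor> < n" using fl2[OF assms(2), of n] assms(3) by simp
  have c1: "circ_mod n (z - real a) = (if 0 \<le> z - real a then z - real a else z - real a + real n)"
    using cm[OF n0, of "z - real a"] ab assms by auto
  have c2: "circ_mod n (real b - real a) = (if 0 \<le> real b - real a then real b - real a else real b - real a + real n)"
    using cm[OF n0, of "real b - real a"] ab by auto
  have "z \<in> arc_set n I \<longleftrightarrow> circ_mod n (z - real a) < circ_mod n (real b - real a)"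
    using assms I by (simp add: arc_set_def)
  also have "\<dots> \<longleftrightarrow> (if a < b then real a \<le> z \<and> z < real b else real a \<le> z \<or> z < real b)"
    unfolding c1 c2 using ab assms by auto
  also have "\<dots> \<longleftrightarrow> (if a < b then a \<le> nat \<lfloor>z\<rfloor> \<and> nat \<lfloor>z\<rfloor> < b else a \<le> nat \<lfloor>z\<rfloor> \<or> nat \<lfloor>z\<rfloor> < b)"
    using fl1[OF assms(2)] fl2[OF assms(2)] by simp
  also have "\<dots> \<longleftrightarrow> inE n I (nat \<lfloor>z\<rfloor>)" using inE_alt[OF ab kn] I by simp
  finally show ?thesis .
qed

lemma arcp_is: "is_arc n I = arcp n I" by (simp add: is_arc_def arcp_def)

definition PP :: "nat \<Rightarrow> nat set \<Rightarrow> real set" where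
  "PP n A = {z. 0 \<le> z \<and> z < real n \<and> nat \<lfloor>z\<rfloor> \<in> A}"

lemma arc_PP: "is_arc n I \<Longrightarrow> arc_set n I = PP n (E n I)"
proof -
  assume a: "is_arc n I"
  have "arc_set n I \<subseteq> {z. 0 \<le> z \<and> z < real n}" by (auto simp: arc_set_def)
  moreover have "\<And>z. 0 \<le> z \<Longrightarrow> z < real n \<Longrightarrow> nat \<lfloor>z\<rfloor> < n" using fl2 by blast
  ultimately show ?thesis using arc_mem[OF a] unfolding PP_def E_def by blast
qed

lemma PP_sub: "A \<subseteq> {..<n} \<Longrightarrow> PP n A \<subseteq> PP n B \<longleftrightarrow> A \<subseteq> B"
proof
  assume A: "A \<subseteq> {..<n}" and S: "PP n A \<subseteq> PP n B"
  show "A \<subseteq> B"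
  proof
    fix k assume "k \<in> A"
    then have "real k \<in> PP n A" using A by (auto simp: PP_def)
    then have "real k \<in> PP n B" using S by blast
    then show "k \<in> B" by (simp add: PP_def)
  qed
qed (auto simp: PP_def)

lemma PP_int: "PP n A \<inter> PP n B = PP n (A \<inter> B)" by (auto simp: PP_def)
lemma PP_empty: "A \<subseteq> {..<n} \<Longrightarrow> PP n A = {} \<longleftrightarrow> A = {}"
proof
  assume A: "A \<subseteq> {..<n}" and e: "PP n A = {}"
  show "A = {}"
  proof (rule ccontr)
    assume "A \<noteq> {}" then obtain k where "k \<in> A" by auto
    then have "real k \<in> PP n A" using A by (auto simp: PP_def)
    then show False using e by auto
  qed
qed (auto simp: PP_def)

lemma Esub: "E n I \<subseteq> {..<n}" by (auto simp: E_def)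

lemma compat_cE: assumes "is_arc n I" "is_arc n J" shows "compatible_arcs n I J \<longleftrightarrow> cE n I J"
proof -
  have i: "arc_set n I \<inter> arc_set n J = {} \<longleftrightarrow> E n I \<inter> E n J = {}"
    unfolding arc_PP[OF assms(1)] arc_PP[OF assms(2)] PP_int using Esub
    by (intro PP_empty) blast
  have s1: "arc_set n I \<subseteq> arc_set n J \<longleftrightarrow> E n I \<subseteq> E n J"
    unfolding arc_PP[OF assms(1)] arc_PP[OF assms(2)] using PP_sub Esub by blast
  have s2: "arc_set n J \<subseteq> arc_set n I \<longleftrightarrow> E n J \<subseteq> E n I"
    unfolding arc_PP[OF assms(1)] arc_PP[OF assms(2)] using PP_sub Esub by blast
  show ?thesis unfolding compatible_arcs_def cE_def psubset_eq using i s1 s2 by blast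
qed

lemma unit_id: assumes "arcp n I" "k < n"
  shows "unit_vec (fst I) k - unit_vec (snd I) k =
    (if inE n I k then 1 else 0) - (if inE n I (pr n k) then 1 else 0)"
  using L1'[OF assms] L2'[OF assms] assms(1) by (auto simp: unit_vec_def arcp_def)

lemma root_fT: assumes "finite T" "\<forall>I\<in>T. arcp n I" "k < n"
  shows "root_comb T g k = fT n T g k - fT n T g (pr n k)"
proof -
  have "root_comb T g k = (\<Sum>I\<in>T. (if inE n I k then g I else 0) - (if inE n I (pr n k) then g I else 0))"
    unfolding root_comb_def
  proof (rule sum.cong)
    fix I assume "I \<in> T"
    then have "arcp n I" using assms(2) by blast
    then show "g I * (unit_vec (fst I) k - unit_vec (snd I) k) =
       (if inE n I k then g I else 0) - (if inE n I (pr n k) then g I else 0)"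
      using unit_id[of n I k] assms(3) by simp
  qed simp
  then show ?thesis unfolding fT_def by (simp add: sum_subtractf)
qed

lemma pr_Suc: "Suc k < n \<Longrightarrow> pr n (Suc k) = k" by (simp add: pr_alt)

lemma constD: assumes "\<forall>k<n. D k = (D (pr n k) :: real)" shows "\<forall>k<n. D k = D 0"
proof (intro allI impI)
  fix k assume "k < n" then show "D k = D 0"
  proof (induction k)
    case (Suc k) then show ?case using assms pr_Suc[OF Suc.prems] by (metis Suc_lessD)
  qed simp
qed

theorem mainTheorem6:
  fixes n :: nat and T1 T2 :: "(nat \<times> nat) set" and \<alpha> \<beta> :: "nat \<times> nat \<Rightarrow> real"
  assumes "n \<ge> 3"
    and "admissible n T1" and "admissible n T2"
    and "\<forall>I\<in>T1. \<alpha> I > 0" and "\<forall>I\<in>T2. \<beta> I > 0"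
    and "(\<Sum>I\<in>T1. \<alpha> I) = 1" and "(\<Sum>I\<in>T2. \<beta> I) = 1"
    and "root_comb T1 \<alpha> = root_comb T2 \<beta>"
  shows "T1 = T2 \<and> (\<forall>I\<in>T1. \<alpha> I = \<beta> I)"
proof -
  have A1: "adm0 n T1"
  proof -
    have h: "finite T1" "\<forall>I\<in>T1. is_arc n I" "\<forall>I\<in>T1. \<forall>J\<in>T1. I \<noteq> J \<longrightarrow> compatible_arcs n I J"
      using assms(2) unfolding admissible_def by auto
    have "\<forall>I\<in>T1. \<forall>J\<in>T1. I \<noteq> J \<longrightarrow> cE n I J" using h(2,3) compat_cE by blast
    then show ?thesis using h unfolding adm0_def arcp_is by blast
  qed
  have A2: "adm0 n T2"
  proof -
    have h: "finite T2" "\<forall>I\<in>T2. is_arc n I" "\<forall>I\<in>T2. \<forall>J\<in>T2. I \<noteq> J \<longrightarrow> compatible_arcs n I J"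
      using assms(3) unfolding admissible_def by auto
    have "\<forall>I\<in>T2. \<forall>J\<in>T2. I \<noteq> J \<longrightarrow> cE n I J" using h(2,3) compat_cE by blast
    then show ?thesis using h unfolding adm0_def arcp_is by blast
  qed
  have fin1: "finite T1" and fin2: "finite T2" and ne1: "T1 \<noteq> {}" and ne2: "T2 \<noteq> {}"
    using assms(2,3) by (auto simp: admissible_def)
  have ar1: "\<forall>I\<in>T1. arcp n I" and ar2: "\<forall>I\<in>T2. arcp n I" using A1 A2 by (auto simp: adm0_def)
  define D where "D k = fT n T1 \<alpha> k - fT n T2 \<beta> k" for k
  have "\<forall>k<n. D k = D (pr n k)"
  proof (intro allI impI)
    fix k assume k: "k < n"
    have "root_comb T1 \<alpha> k = root_comb T2 \<beta> k" using assms(8) by simp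
    then show "D k = D (pr n k)" unfolding D_def using root_fT[OF fin1 ar1 k] root_fT[OF fin2 ar2 k] by simp
  qed
  then have Dc: "\<forall>k<n. D k = D 0" by (rule constD)
  have nn1: "\<And>k. fT n T1 \<alpha> k \<ge> 0" unfolding fT_def using assms(4) by (intro sum_nonneg) (auto simp: less_imp_le)
  have nn2: "\<And>k. fT n T2 \<beta> k \<ge> 0" unfolding fT_def using assms(5) by (intro sum_nonneg) (auto simp: less_imp_le)
  have bd1: "\<forall>I\<in>T1. snd I \<in> {..<n} \<or> pr n (fst I) \<in> {..<n}" using ar1 by (auto simp: arcp_def)
  have bd2: "\<forall>I\<in>T2. snd I \<in> {..<n} \<or> pr n (fst I) \<in> {..<n}" using ar2 by (auto simp: arcp_def)
  obtain k1 where k1: "k1 < n" "\<forall>I\<in>T1. \<not> inE n I k1" using gapA[OF A1 ne1 bd1] by auto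
  obtain k2 where k2: "k2 < n" "\<forall>I\<in>T2. \<not> inE n I k2" using gapA[OF A2 ne2 bd2] by auto
  have "fT n T1 \<alpha> k1 = 0" using k1 f_zero_iff[OF fin1 assms(4)] by auto
  moreover have "D k1 = D 0" using Dc k1(1) by blast
  ultimately have "D 0 \<le> 0" using nn2[of k1] unfolding D_def by linarith
  have "fT n T2 \<beta> k2 = 0" using k2 f_zero_iff[OF fin2 assms(5)] by auto
  moreover have "D k2 = D 0" using Dc k2(1) by blast
  ultimately have "D 0 \<ge> 0" using nn1[of k2] unfolding D_def by linarith
  then have "D 0 = 0" using \<open>D 0 \<le> 0\<close> by linarith
  then have "\<forall>k<n. fT n T1 \<alpha> k = fT n T2 \<beta> k" using Dc unfolding D_def by auto
  then show ?thesis using lemB[OF A1 A2 assms(4,5)] by blast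
qed

end
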